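(* For every $(2,2)$-form $\alpha$ in $\mathbb C^4$ there exists a basis $\omega_1,\dots,\omega_4$ of $(\mathbb C^4)^\ast$ such that $$\alpha\wedge\omega_1\wedge\omega_2\wedge\bar\omega_1\wedge\bar\omega_j=\alpha\wedge\omega_1\wedge\omega_2\wedge\bar\omega_2\wedge\bar\omega_j=0\quad\text{for } j=3,4.$$
   Context: Forms are constant-coefficient forms on $\mathbb C^4$, i.e. elements of the exterior algebra generated by $(\mathbb C^4)^\ast$ and its complex conjugate; a $(2,2)$-form is a linear combination of wedge products of two $(1,0)$-forms and two $(0,1)$-forms. *)

theory Defs
  imports Complex_Main
begin

text \<open>Constant-coefficient forms on C^4: the exterior algebra over C on the 8 generators
  dz_0..dz_3 (index i) and dzbar_0..dzbar_3 (index 4+i). A form is given by its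
  coefficient function on increasing multi-indices, i.e. finite subsets of {0..<8}:
  the form is  sum_S  f S * e_S  with  e_S = e_{s1} wedge ... wedge e_{sk},  s1 < ... < sk.\<close>

type_synonym form = "nat set \<Rightarrow> complex"

definition inv_count :: "nat set \<Rightarrow> nat set \<Rightarrow> nat" where
  "inv_count S T = card {(s, t). s \<in> S \<and> t \<in> T \<and> t < s}"

text \<open>wedge product: e_S wedge e_T = 0 if S, T meet, else (-1)^inv e_(S union T)\<close>
definition wedge :: "form \<Rightarrow> form \<Rightarrow> form" where
  "wedge a b = (\<lambda>U. \<Sum>S\<in>Pow U. (-1) ^ inv_count S (U - S) * a S * b (U - S))"

definition dz :: "nat \<Rightarrow> form" where
  "dz i = (\<lambda>S. if S = {i} then 1 else 0)"

definition dzbar :: "nat \<Rightarrow> form" where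
  "dzbar i = (\<lambda>S. if S = {i + 4} then 1 else 0)"

text \<open>an element w of (C^4)^*, given by its coordinates w 0..w 3, as a (1,0)-form,
  and its complex conjugate as a (0,1)-form\<close>
definition form10 :: "(nat \<Rightarrow> complex) \<Rightarrow> form" where
  "form10 w = (\<lambda>S. \<Sum>i<4. w i * dz i S)"

definition form_conj :: "(nat \<Rightarrow> complex) \<Rightarrow> form" where
  "form_conj w = (\<lambda>S. \<Sum>i<4. cnj (w i) * dzbar i S)"

definition is_22_form :: "form \<Rightarrow> bool" where
  "is_22_form \<alpha> \<longleftrightarrow> (\<forall>S. \<alpha> S \<noteq> 0 \<longrightarrow>
      S \<subseteq> {0..<8} \<and> card (S \<inter> {0..<4}) = 2 \<and> card (S \<inter> {4..<8}) = 2)"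

definition is_basis4 :: "(nat \<Rightarrow> nat \<Rightarrow> complex) \<Rightarrow> bool" where
  "is_basis4 \<omega> \<longleftrightarrow>
     (\<forall>c::nat \<Rightarrow> complex. (\<forall>i<4. (\<Sum>k\<in>{1..4}. c k * \<omega> k i) = 0) \<longrightarrow> (\<forall>k\<in>{1..4}. c k = 0)) \<and>
     (\<forall>v::nat \<Rightarrow> complex. \<exists>c::nat \<Rightarrow> complex. \<forall>i<4. v i = (\<Sum>k\<in>{1..4}. c k * \<omega> k i))"

end

theory Submission
  imports Defs
begin


definition ee :: "nat \<Rightarrow> form" where "ee a = (\<lambda>S. if S = {a} then 1 else 0)"
definition one :: form where "one = (\<lambda>S. if S = {} then 1 else 0)"
definition sg :: "nat \<Rightarrow> nat set \<Rightarrow> complex" where "sg a U = (-1) ^ card {t\<in>U. t < a}"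

lemma inv_count_single: "inv_count {a} T = card {t\<in>T. t < a}"
proof -
  have "{(s, t). s \<in> {a} \<and> t \<in> T \<and> t < s} = (\<lambda>t. (a,t)) ` {t\<in>T. t < a}" by auto
  thus ?thesis unfolding inv_count_def by (simp add: card_image inj_on_def)
qed

lemma wedge_ee: "wedge (ee a) Y U = (if finite U \<and> a \<in> U then sg a U * Y (U - {a}) else 0)"
proof (cases "finite U")
  case False
  then have "infinite (Pow U)" by simp
  then show ?thesis by (simp add: wedge_def False)
next
  case True
  have "wedge (ee a) Y U = (\<Sum>S\<in>Pow U. if S = {a} then (-1) ^ inv_count S (U - S) * Y (U - S) else 0)"
    unfolding wedge_def ee_def by (rule sum.cong) auto
  also have "\<dots> = (if a \<in> U then (-1) ^ inv_count {a} (U - {a}) * Y (U - {a}) else 0)"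
    using True by (simp add: sum.delta)
  also have "{t\<in>U - {a}. t < a} = {t\<in>U. t < a}" by auto
  then have "inv_count {a} (U - {a}) = card {t\<in>U. t < a}" by (simp add: inv_count_single)
  finally show ?thesis using True by (simp add: sg_def)
qed

lemma sg_swap: assumes "finite U" "a \<in> U" "b \<in> U" "b < a"
  shows "sg a U * sg b (U - {a}) = - (sg b U * sg a (U - {b}))"
proof -
  have 1: "{t\<in>U. t < a} = insert b {t\<in>U - {b}. t < a}" using assms by auto
  have 2: "{t\<in>U - {a}. t < b} = {t\<in>U. t < b}" using assms by auto
  have "card {t\<in>U. t < a} = Suc (card {t\<in>U - {b}. t < a})" unfolding 1 using assms
    by (subst card_insert_disjoint) auto
  then show ?thesis unfolding sg_def 2 by simp
qed

lemma wedge_ee_swap: assumes "a \<noteq> b"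
  shows "wedge (ee a) (wedge (ee b) Y) U = - wedge (ee b) (wedge (ee a) Y) U"
proof (cases "finite U \<and> a \<in> U \<and> b \<in> U")
  case False then show ?thesis using assms by (auto simp: wedge_ee)
next
  case True
  have e: "U - {a} - {b} = U - {b} - {a}" by auto
  have s: "sg a U * sg b (U - {a}) = - (sg b U * sg a (U - {b}))"
  proof (cases "b < a")
    case True then show ?thesis using sg_swap \<open>finite U \<and> a \<in> U \<and> b \<in> U\<close> by auto
  next
    case False then have "a < b" using assms by auto
    then have "sg b U * sg a (U - {b}) = - (sg a U * sg b (U - {a}))" using sg_swap True by auto
    then show ?thesis by simp
  qed
  show ?thesis using True assms by (simp add: wedge_ee e mult.assoc[symmetric] s)
qed

lemma wedge_ee_same: "wedge (ee a) (wedge (ee a) Y) U = 0"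
  by (simp add: wedge_ee)

lemma wedge_ee_one: "wedge (ee a) one = ee a"
proof (rule ext)
  fix U show "wedge (ee a) one U = ee a U"
    proof (cases "U = {a}")
    case True
    have e: "{t. t = a \<and> t < a} = {}" by auto
    show ?thesis using True unfolding wedge_ee by (simp add: one_def sg_def ee_def e)
  next
    case False
    then have "U - {a} \<noteq> {} \<or> a \<notin> U" by auto
    then show ?thesis using False unfolding wedge_ee by (auto simp add: one_def ee_def)
  qed
qed

lemma wedge_neg_right: "wedge a (\<lambda>T. - b T) U = - wedge a b U"
  by (simp add: wedge_def sum_negf[symmetric])

lemma wedge_zero_right: "wedge a (\<lambda>T. 0) U = 0"
  by (simp add: wedge_def)

lemma wedge_sum_right: "wedge a (\<lambda>T. \<Sum>x\<in>A. f x * g x T) = (\<lambda>U. \<Sum>x\<in>A. f x * wedge a (g x) U)"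
proof (rule ext)
  fix U
  have "wedge a (\<lambda>T. \<Sum>x\<in>A. f x * g x T) U = (\<Sum>S\<in>Pow U. \<Sum>x\<in>A. f x * ((-1) ^ inv_count S (U - S) * a S * g x (U - S)))"
    unfolding wedge_def by (rule sum.cong[OF refl]) (simp add: sum_distrib_left mult.left_commute)
  also have "\<dots> = (\<Sum>x\<in>A. \<Sum>S\<in>Pow U. f x * ((-1) ^ inv_count S (U - S) * a S * g x (U - S)))"
    by (rule sum.swap)
  also have "\<dots> = (\<Sum>x\<in>A. f x * wedge a (g x) U)"
    unfolding wedge_def by (simp add: sum_distrib_left)
  finally show "wedge a (\<lambda>T. \<Sum>x\<in>A. f x * g x T) U = (\<Sum>x\<in>A. f x * wedge a (g x) U)" .
qed

lemma wedge_sum_left: "wedge (\<lambda>S. \<Sum>x\<in>A. f x * g x S) b = (\<lambda>U. \<Sum>x\<in>A. f x * wedge (g x) b U)"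
proof (rule ext)
  fix U
  have "wedge (\<lambda>S. \<Sum>x\<in>A. f x * g x S) b U = (\<Sum>S\<in>Pow U. \<Sum>x\<in>A. f x * ((-1) ^ inv_count S (U - S) * g x S * b (U - S)))"
    unfolding wedge_def by (rule sum.cong[OF refl]) (simp add: sum_distrib_left sum_distrib_right, intro sum.cong refl, simp add: ac_simps)
  also have "\<dots> = (\<Sum>x\<in>A. \<Sum>S\<in>Pow U. f x * ((-1) ^ inv_count S (U - S) * g x S * b (U - S)))"
    by (rule sum.swap)
  also have "\<dots> = (\<Sum>x\<in>A. f x * wedge (g x) b U)"
    unfolding wedge_def by (simp add: sum_distrib_left)
  finally show "wedge (\<lambda>S. \<Sum>x\<in>A. f x * g x S) b U = (\<Sum>x\<in>A. f x * wedge (g x) b U)" .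
qed



definition K :: "(nat \<Rightarrow> nat \<Rightarrow> nat \<Rightarrow> nat \<Rightarrow> complex) \<Rightarrow> nat \<Rightarrow> nat \<Rightarrow> (nat \<Rightarrow> complex) \<Rightarrow> (nat \<Rightarrow> complex) \<Rightarrow> complex" where
  "K c i j u v = (\<Sum>k<4. cnj (u k) * (\<Sum>l<4. cnj (v l) * c i j k l))"

definition Fc :: "(nat \<Rightarrow> nat \<Rightarrow> nat \<Rightarrow> nat \<Rightarrow> complex) \<Rightarrow> (nat \<Rightarrow> complex) \<Rightarrow> (nat \<Rightarrow> complex) \<Rightarrow> (nat \<Rightarrow> complex) \<Rightarrow> (nat \<Rightarrow> complex) \<Rightarrow> complex" where
  "Fc c a b u v = (\<Sum>i<4. a i * (\<Sum>j<4. b j * K c i j u v))"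

definition Z :: "nat \<Rightarrow> nat \<Rightarrow> nat \<Rightarrow> nat \<Rightarrow> form" where
  "Z i j k l = wedge (ee i) (wedge (ee j) (wedge (ee (k+4)) (wedge (ee (l+4)) one)))"

definition cf :: "form \<Rightarrow> nat set \<Rightarrow> nat \<Rightarrow> nat \<Rightarrow> nat \<Rightarrow> nat \<Rightarrow> complex" where
  "cf \<alpha> U i j k l = wedge \<alpha> (Z i j k l) U"

lemma form10_eq: "form10 w = (\<lambda>T. \<Sum>i<4. w i * ee i T)"
  by (simp add: form10_def dz_def ee_def)

lemma form_conj_eq: "form_conj w = (\<lambda>T. \<Sum>i<4. cnj (w i) * ee (i+4) T)"
  by (simp add: form_conj_def dzbar_def ee_def)

lemma form_conj_eq': "form_conj w = (\<lambda>T. \<Sum>i<4. cnj (w i) * wedge (ee (i+4)) one T)"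
  by (simp add: form_conj_eq wedge_ee_one)

lemma expansion:
  "wedge \<alpha> (wedge (form10 w1) (wedge (form10 w2) (wedge (form_conj w3) (form_conj w4)))) U
   = Fc (cf \<alpha> U) w1 w2 w3 w4"
proof -
  have "wedge \<alpha> (wedge (form10 w1) (wedge (form10 w2) (wedge (form_conj w3) (form_conj w4)))) U
    = wedge \<alpha> (wedge (\<lambda>T. \<Sum>i<4. w1 i * ee i T) (wedge (\<lambda>T. \<Sum>i<4. w2 i * ee i T)
        (wedge (\<lambda>T. \<Sum>i<4. cnj (w3 i) * ee (i+4) T) (\<lambda>T. \<Sum>i<4. cnj (w4 i) * wedge (ee (i+4)) one T)))) U"
    unfolding form10_eq form_conj_eq[of w3] form_conj_eq'[of w4] ..
  also have "\<dots> = Fc (cf \<alpha> U) w1 w2 w3 w4"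
    by (simp only: wedge_sum_left wedge_sum_right Fc_def K_def cf_def Z_def)
  finally show ?thesis .
qed

lemma wedge_neg_right': "wedge a (\<lambda>T. - b T) = (\<lambda>U. - wedge a b U)"
  by (rule ext) (rule wedge_neg_right)

lemma cf_anti1: "cf \<alpha> U i j k l = - cf \<alpha> U j i k l"
proof (cases "i = j")
  case True
  have "Z i i k l = (\<lambda>T. 0)" by (simp add: Z_def fun_eq_iff wedge_ee_same)
  then show ?thesis using True by (simp add: cf_def wedge_zero_right)
next
  case False
  have "Z i j k l = (\<lambda>T. - Z j i k l T)" unfolding Z_def fun_eq_iff using False wedge_ee_swap by blast
  then show ?thesis by (simp add: cf_def wedge_neg_right)
qed

lemma cf_anti2: "cf \<alpha> U i j k l = - cf \<alpha> U i j l k"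
proof (cases "k = l")
  case True
  have "wedge (ee (k+4)) (wedge (ee (k+4)) one) = (\<lambda>T. 0)" by (simp add: fun_eq_iff wedge_ee_same)
  then have "Z i j k k = (\<lambda>T. 0)" by (simp add: Z_def fun_eq_iff wedge_zero_right wedge_ee)
  then show ?thesis using True by (simp add: cf_def wedge_zero_right)
next
  case False
  have "wedge (ee (k+4)) (wedge (ee (l+4)) one) = (\<lambda>T. - wedge (ee (l+4)) (wedge (ee (k+4)) one) T)"
    unfolding fun_eq_iff using False wedge_ee_swap[of "k+4" "l+4"] by simp
  then have "Z i j k l = (\<lambda>T. - Z i j l k T)"
    by (simp only: Z_def wedge_neg_right')
  then show ?thesis by (simp add: cf_def wedge_neg_right)
qed

lemma K_swap:
  assumes "\<And>k l. c i j k l = - c i j l k"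
  shows "K c i j u v = - K c i j v u"
proof -
  have "K c i j v u = (\<Sum>k<4. \<Sum>l<4. cnj (v k) * (cnj (u l) * c i j k l))"
    by (simp add: K_def sum_distrib_left)
  also have "\<dots> = (\<Sum>l<4. \<Sum>k<4. cnj (v k) * (cnj (u l) * c i j k l))" by (rule sum.swap)
  also have "\<dots> = (\<Sum>l<4. \<Sum>k<4. - (cnj (u l) * (cnj (v k) * c i j l k)))"
    apply (intro sum.cong refl)
    subgoal for l k using assms[of k l] by (simp add: algebra_simps)
    done
  also have "\<dots> = - K c i j u v" by (simp add: K_def sum_distrib_left sum_negf)
  finally show ?thesis by simp
qed

lemma sum_lin3: "(\<Sum>i\<in>A. f i * (X i + p * Y i + q * W i)) = (\<Sum>i\<in>A. f i * X i) + p * (\<Sum>i\<in>A. f i * Y i) + q * (\<Sum>i\<in>A. (f i::complex) * W i)"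
  by (simp add: sum.distrib sum_distrib_left distrib_left mult.left_commute add.assoc)

lemma sum_lin3c: "(\<Sum>i\<in>A. cnj (X i + p * Y i + q * W i) * f i) = (\<Sum>i\<in>A. cnj (X i) * f i) + cnj p * (\<Sum>i\<in>A. cnj (Y i) * f i) + cnj q * (\<Sum>i\<in>A. cnj (W i) * f i)"
  by (simp add: sum.distrib sum_distrib_left distrib_right mult.assoc)

lemma K_lin: "K c i j u (\<lambda>l. v l + p * x l + q * y l) = K c i j u v + cnj p * K c i j u x + cnj q * K c i j u y"
  unfolding K_def sum_lin3c by (rule sum_lin3)

lemma Fc_lin: "Fc c a b u (\<lambda>l. v l + p * x l + q * y l) = Fc c a b u v + cnj p * Fc c a b u x + cnj q * Fc c a b u y"
  unfolding Fc_def K_lin sum_lin3 ..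

lemma Fc_swap:
  assumes "\<And>i j k l. c i j k l = - c i j l k"
  shows "Fc c a b u v = - Fc c a b v u"
proof -
  have k: "\<And>i j. K c i j u v = - K c i j v u" using K_swap[where c=c, OF assms] by blast
  show ?thesis unfolding Fc_def k by (simp add: sum_negf)
qed

lemma Fc_same:
  assumes "\<And>i j k l. c i j k l = - c i j l k"
  shows "Fc c a b u u = 0"
  using Fc_swap[OF assms, where a=a and b=b and u=u and v=u] by simp



definition uv :: "nat \<Rightarrow> nat \<Rightarrow> complex" where "uv a = (\<lambda>i. if i = a then 1 else 0)"

definition eop :: "(nat \<Rightarrow> nat \<Rightarrow> complex) \<Rightarrow> nat \<Rightarrow> nat \<Rightarrow> complex \<Rightarrow> nat \<Rightarrow> nat \<Rightarrow> complex" where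
  "eop \<omega> k m t = (\<lambda>n i. \<omega> n i + (if n = k then t * \<omega> m i else 0))"

definition base :: "nat \<Rightarrow> nat \<Rightarrow> nat \<Rightarrow> nat \<Rightarrow> nat \<Rightarrow> nat \<Rightarrow> complex" where
  "base a b c d = (\<lambda>n. if n = 1 then uv a else if n = 2 then uv b else if n = 3 then uv c else uv d)"

lemma sum4: "(\<Sum>k\<in>{1..4::nat}. f k) = f 1 + f 2 + f 3 + f 4"
proof -
  have "{1..4::nat} = {1,2,3,4}" by auto
  then show ?thesis by (simp add: add.assoc)
qed

lemma sum_plus_delta: "finite A \<Longrightarrow> m \<in> A \<Longrightarrow> (\<Sum>n\<in>A. f n + (if n = m then X else 0)) = (\<Sum>n\<in>A. f n) + (X::complex)"
  by (simp add: sum.distrib)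

lemma eop_basis:
  assumes b: "is_basis4 \<omega>" and k: "k \<in> {1..4}" and m: "m \<in> {1..4}" and km: "k \<noteq> m"
  shows "is_basis4 (eop \<omega> k m t)"
  unfolding is_basis4_def
proof (intro conjI allI impI ballI)
  fix c :: "nat \<Rightarrow> complex" and n :: nat
  assume H: "\<forall>i<4. (\<Sum>n\<in>{1..4}. c n * eop \<omega> k m t n i) = 0" and n: "n \<in> {1..4}"
  define c' where "c' n = c n + (if n = m then t * c k else 0)" for n
  have eq: "(\<Sum>n\<in>{1..4}. c' n * \<omega> n i) = (\<Sum>n\<in>{1..4}. c n * eop \<omega> k m t n i)" for i
  proof -
    have "(\<Sum>n\<in>{1..4}. c' n * \<omega> n i) = (\<Sum>n\<in>{1..4}. c n * \<omega> n i + (if n = m then t * c k * \<omega> m i else 0))"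
      by (intro sum.cong refl, case_tac "x = m") (simp_all add: c'_def algebra_simps)
    also have "\<dots> = (\<Sum>n\<in>{1..4}. c n * \<omega> n i) + t * c k * \<omega> m i"
      using m by (rule sum_plus_delta[OF finite_atLeastAtMost])
    also have "\<dots> = (\<Sum>n\<in>{1..4}. c n * \<omega> n i + (if n = k then t * c k * \<omega> m i else 0))"
      using k by (rule sum_plus_delta[OF finite_atLeastAtMost, symmetric])
    also have "\<dots> = (\<Sum>n\<in>{1..4}. c n * eop \<omega> k m t n i)"
      by (intro sum.cong refl, case_tac "x = k") (simp_all add: eop_def algebra_simps)
    finally show ?thesis .
  qed
  have z: "\<forall>n\<in>{1..4}. c' n = 0" using b H eq unfolding is_basis4_def by metis
  have ck: "c k = 0" using z[rule_format, OF k] km by (simp add: c'_def)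
  show "c n = 0"
  proof (cases "n = m")
    case True then show ?thesis using z[rule_format, OF m] ck by (simp add: c'_def)
  next
    case False then show ?thesis using z[rule_format, OF n] by (simp add: c'_def)
  qed
next
  fix v :: "nat \<Rightarrow> complex"
  obtain d where d: "\<forall>i<4. v i = (\<Sum>n\<in>{1..4}. d n * \<omega> n i)" using b unfolding is_basis4_def by metis
  define c where "c n = d n - (if n = m then t * d k else 0)" for n
  have "v i = (\<Sum>n\<in>{1..4}. c n * eop \<omega> k m t n i)" if i: "i < 4" for i
  proof -
    have "(\<Sum>n\<in>{1..4}. c n * eop \<omega> k m t n i) = (\<Sum>n\<in>{1..4}. c n * \<omega> n i + (if n = k then t * c k * \<omega> m i else 0))"
      by (intro sum.cong refl, case_tac "x = k") (simp_all add: eop_def algebra_simps)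
    also have "\<dots> = (\<Sum>n\<in>{1..4}. c n * \<omega> n i) + t * c k * \<omega> m i"
      using k by (rule sum_plus_delta[OF finite_atLeastAtMost])
    also have "(\<Sum>n\<in>{1..4}. c n * \<omega> n i) = (\<Sum>n\<in>{1..4}. d n * \<omega> n i + (if n = m then - (t * d k * \<omega> m i) else 0))"
      by (intro sum.cong refl, case_tac "x = m") (simp_all add: c_def algebra_simps)
    also have "\<dots> = (\<Sum>n\<in>{1..4}. d n * \<omega> n i) - t * d k * \<omega> m i"
      using m by (subst sum_plus_delta[OF finite_atLeastAtMost]) auto
    finally show ?thesis using d i km by (simp add: c_def)
  qed
  then show "\<exists>c. \<forall>i<4. v i = (\<Sum>n\<in>{1..4}. c n * eop \<omega> k m t n i)" by blast
qed

lemma ex_other: "finite F \<Longrightarrow> card F < 4 \<Longrightarrow> \<exists>x<4. (x::nat) \<notin> F"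
proof (rule ccontr)
  assume f: "finite F" "card F < 4" and "\<not> (\<exists>x<4. x \<notin> F)"
  then have "{0..<4} \<subseteq> F" by auto
  then have "card {0..<4::nat} \<le> card F" using f(1) by (rule card_mono[rotated])
  then show False using f by simp
qed

lemma in4: assumes "distinct [a,b,c,d]" "a < 4" "b < 4" "c < 4" "d < 4" "(i::nat) < 4"
  shows "i = a \<or> i = b \<or> i = c \<or> i = d"
proof -
  have "card {a,b,c,d} = 4" using assms(1) by simp
  moreover have "{a,b,c,d} \<subseteq> {0..<4}" using assms by auto
  ultimately have "{a,b,c,d} = {0..<4}" by (intro card_subset_eq) simp_all
  then have "i \<in> {a,b,c,d}" using assms(6) by simp
  then show ?thesis by simp
qed

lemma base_basis:
  assumes "distinct [a,b,c,d]" "a < 4" "b < 4" "c < 4" "d < 4"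
  shows "is_basis4 (base a b c d)"
  unfolding is_basis4_def
proof (intro conjI allI impI ballI)
  fix cc :: "nat \<Rightarrow> complex" and n :: nat
  assume H: "\<forall>i<4. (\<Sum>n\<in>{1..4}. cc n * base a b c d n i) = 0" and n: "n \<in> {1..4}"
  have "cc 1 = 0" using H[rule_format, of a, unfolded sum4] assms by (simp add: base_def uv_def)
  moreover have "cc 2 = 0" using H[rule_format, of b, unfolded sum4] assms by (simp add: base_def uv_def)
  moreover have "cc 3 = 0" using H[rule_format, of c, unfolded sum4] assms by (simp add: base_def uv_def)
  moreover have "cc 4 = 0" using H[rule_format, of d, unfolded sum4] assms by (simp add: base_def uv_def)
  moreover have "n = 1 \<or> n = 2 \<or> n = 3 \<or> n = 4" using n by auto
  ultimately show "cc n = 0" by auto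
next
  fix v :: "nat \<Rightarrow> complex"
  define cc where "cc n = (if n = 1 then v a else if n = 2 then v b else if n = 3 then v c else v d)" for n :: nat
  have "v i = (\<Sum>n\<in>{1..4}. cc n * base a b c d n i)" if "i < 4" for i
    unfolding sum4 using in4[OF assms that] assms(1) by (elim disjE) (simp_all add: base_def uv_def cc_def)
  then show "\<exists>cc. \<forall>i<4. v i = (\<Sum>n\<in>{1..4}. cc n * base a b c d n i)" by blast
qed



definition wv :: "nat \<Rightarrow> nat \<Rightarrow> complex \<Rightarrow> nat \<Rightarrow> complex" where
  "wv a c s = (\<lambda>i. uv a i + s * uv c i)"

lemma sum_u: assumes "a < 4" shows "(\<Sum>i<4. uv a i * X i) = X a"
proof -
  have e: "(\<lambda>i. uv a i * X i) = (\<lambda>i. if i = a then X a else 0)" by (auto simp: uv_def fun_eq_iff)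
  show ?thesis unfolding e using assms by simp
qed

lemma sum_u2: assumes "a < 4" "c < 4"
  shows "(\<Sum>i<4. (uv a i + s * uv c i) * X i) = X a + s * X c"
proof -
  have "(\<Sum>i<4. (uv a i + s * uv c i) * X i) = (\<Sum>i<4. uv a i * X i) + s * (\<Sum>i<4. uv c i * X i)"
    by (simp add: distrib_right sum.distrib sum_distrib_left mult.assoc)
  then show ?thesis using sum_u[OF assms(1)] sum_u[OF assms(2)] by simp
qed

lemma cnj_uv: "cnj (uv a i) = uv a i" by (simp add: uv_def)

lemma Hexp:
  assumes "a < 4" "b < 4" "c < 4" "d < 4"
  shows "Fc C (wv a c s) (wv b d t) (wv a c s) (wv b d t) =
   ((C a b a b + cnj t * C a b a d) + cnj s * (C a b c b + cnj t * C a b c d))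
 + t * ((C a d a b + cnj t * C a d a d) + cnj s * (C a d c b + cnj t * C a d c d))
 + s * (((C c b a b + cnj t * C c b a d) + cnj s * (C c b c b + cnj t * C c b c d))
 + t * ((C c d a b + cnj t * C c d a d) + cnj s * (C c d c b + cnj t * C c d c d)))"
  unfolding Fc_def K_def wv_def using assms by (simp add: sum_u2 cnj_uv)



lemma step:
  fixes v :: "nat \<Rightarrow> complex"
  assumes A2: "\<And>i j k l. c i j k l = - c i j l k" and H: "Fc c b1 b2 b1 b2 \<noteq> 0"
    and x_def: "x = cnj (- Fc c b1 b2 b2 v / Fc c b1 b2 b1 b2)" and y_def: "y = cnj (Fc c b1 b2 b1 v / Fc c b1 b2 b1 b2)"
  shows "Fc c b1 b2 b1 (\<lambda>i. v i + (-x) * b1 i + (-y) * b2 i) = 0"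
    and "Fc c b1 b2 b2 (\<lambda>i. v i + (-x) * b1 i + (-y) * b2 i) = 0"
proof -
  have s: "Fc c b1 b2 b2 b1 = - Fc c b1 b2 b1 b2" by (rule Fc_swap[OF A2])
  show "Fc c b1 b2 b1 (\<lambda>i. v i + (-x) * b1 i + (-y) * b2 i) = 0"
    unfolding Fc_lin using H by (simp add: Fc_same[OF A2] x_def y_def)
  show "Fc c b1 b2 b2 (\<lambda>i. v i + (-x) * b1 i + (-y) * b2 i) = 0"
    unfolding Fc_lin using H by (simp add: Fc_same[OF A2] s x_def y_def)
qed

lemma extend:
  assumes b: "is_basis4 \<beta>" and A2: "\<And>i j k l. c i j k l = - c i j l k"
    and H: "Fc c (\<beta> 1) (\<beta> 2) (\<beta> 1) (\<beta> 2) \<noteq> 0"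
  shows "\<exists>\<omega>. is_basis4 \<omega> \<and> (\<forall>j\<in>{3,4::nat}. Fc c (\<omega> 1) (\<omega> 2) (\<omega> 1) (\<omega> j) = 0 \<and> Fc c (\<omega> 1) (\<omega> 2) (\<omega> 2) (\<omega> j) = 0)"
proof -
  define h where "h = Fc c (\<beta> 1) (\<beta> 2) (\<beta> 1) (\<beta> 2)"
  define x3 where "x3 = cnj (- Fc c (\<beta> 1) (\<beta> 2) (\<beta> 2) (\<beta> 3) / h)"
  define y3 where "y3 = cnj (Fc c (\<beta> 1) (\<beta> 2) (\<beta> 1) (\<beta> 3) / h)"
  define x4 where "x4 = cnj (- Fc c (\<beta> 1) (\<beta> 2) (\<beta> 2) (\<beta> 4) / h)"
  define y4 where "y4 = cnj (Fc c (\<beta> 1) (\<beta> 2) (\<beta> 1) (\<beta> 4) / h)"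
  define \<omega> where "\<omega> = eop (eop (eop (eop \<beta> 3 1 (-x3)) 3 2 (-y3)) 4 1 (-x4)) 4 2 (-y4)"
  have b\<omega>: "is_basis4 \<omega>" unfolding \<omega>_def by (intro eop_basis b) auto
  have o1: "\<omega> 1 = \<beta> 1" by (simp add: \<omega>_def eop_def fun_eq_iff)
  have o2: "\<omega> 2 = \<beta> 2" by (simp add: \<omega>_def eop_def fun_eq_iff)
  have o3: "\<omega> 3 = (\<lambda>i. \<beta> 3 i + (-x3) * \<beta> 1 i + (-y3) * \<beta> 2 i)" by (simp add: \<omega>_def eop_def fun_eq_iff)
  have o4: "\<omega> 4 = (\<lambda>i. \<beta> 4 i + (-x4) * \<beta> 1 i + (-y4) * \<beta> 2 i)" by (simp add: \<omega>_def eop_def fun_eq_iff)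
  have H': "Fc c (\<beta> 1) (\<beta> 2) (\<beta> 1) (\<beta> 2) \<noteq> 0" by (rule H)
  note st3 = step[OF A2 H' x3_def[unfolded h_def] y3_def[unfolded h_def]]
  note st4 = step[OF A2 H' x4_def[unfolded h_def] y4_def[unfolded h_def]]
  show ?thesis
  proof (rule exI[where x=\<omega>], rule conjI[OF b\<omega>], rule ballI)
    fix j :: nat assume "j \<in> {3,4}"
    then consider "j = 3" | "j = 4" by auto
    then show "Fc c (\<omega> 1) (\<omega> 2) (\<omega> 1) (\<omega> j) = 0 \<and> Fc c (\<omega> 1) (\<omega> 2) (\<omega> 2) (\<omega> j) = 0"
    proof cases
      case 1 show ?thesis unfolding 1 o1 o2 o3 using st3 by blast
    next
      case 2 show ?thesis unfolding 2 o1 o2 o4 using st4 by blast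
    qed
  qed
qed



lemma ex2: assumes "a < 4" "b < 4" "a \<noteq> (b::nat)"
  shows "\<exists>c d. distinct [a,b,c,d] \<and> c < 4 \<and> d < 4"
proof -
  have "card {a,b} < 4" using assms by simp
  then obtain c where c: "c < 4" "c \<notin> {a,b}" using ex_other[of "{a,b}"] by auto
  have "card {a,b,c} < 4" using assms c by simp
  then obtain d where d: "d < 4" "d \<notin> {a,b,c}" using ex_other[of "{a,b,c}"] by auto
  show ?thesis using assms c d by (intro exI[of _ c] exI[of _ d]) auto
qed

lemma ex1: assumes "distinct [a,b,d]" "a < 4" "b < 4" "d < (4::nat)"
  shows "\<exists>c. distinct [a,b,c,d] \<and> c < 4"
proof -
  have "card {a,b,d} < 4" using assms by simp
  then obtain c where c: "c < 4" "c \<notin> {a,b,d}" using ex_other[of "{a,b,d}"] by auto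
  show ?thesis using assms c by (intro exI[of _ c]) auto
qed

lemma allzero:
  fixes c :: "nat \<Rightarrow> nat \<Rightarrow> nat \<Rightarrow> nat \<Rightarrow> complex"
  assumes A1: "\<And>i j k l. c i j k l = - c j i k l" and A2: "\<And>i j k l. c i j k l = - c i j l k"
    and NB: "\<And>a b cc d s t. distinct [a,b,cc,d] \<Longrightarrow> a < 4 \<Longrightarrow> b < 4 \<Longrightarrow> cc < 4 \<Longrightarrow> d < 4 \<Longrightarrow>
       Fc c (wv a cc s) (wv b d t) (wv a cc s) (wv b d t) = 0"
    and lt: "x < 4" "y < 4" "z < 4" "w < 4"
  shows "c x y z w = 0"
proof -
  have zi: "c i i k l = 0" for i k l using A1[of i i k l] by simp
  have zk: "c i j k k = 0" for i j k using A2[of i j k k] by simp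
  have F0: "c a b a b = 0" if ab: "a < 4" "b < 4" "a \<noteq> b" for a b
  proof -
    obtain cc d where cd: "distinct [a,b,cc,d]" "cc < 4" "d < 4" using ex2[OF ab] by blast
    show ?thesis using NB[OF cd(1) ab(1,2) cd(2,3), of 0 0] Hexp[OF ab(1,2) cd(2,3)] by simp
  qed
  have F1: "c a b a d = 0" if h: "distinct [a,b,d]" "a < 4" "b < 4" "d < 4" for a b d
  proof -
    obtain cc where cc: "distinct [a,b,cc,d]" "cc < 4" using ex1[OF h] by blast
    have z1: "c a b a b = 0" "c a d a d = 0" using F0 h by auto
    have e1: "Fc c (wv a cc 0) (wv b d 1) (wv a cc 0) (wv b d 1) = c a b a d + c a d a b"
      using Hexp[OF h(2,3) cc(2) h(4)] z1 by simp
    have e2: "Fc c (wv a cc 0) (wv b d \<i>) (wv a cc 0) (wv b d \<i>) = - \<i> * c a b a d + \<i> * c a d a b"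
      using Hexp[OF h(2,3) cc(2) h(4)] z1 by simp
    have n1: "Fc c (wv a cc 0) (wv b d 1) (wv a cc 0) (wv b d 1) = 0" by (rule NB[OF cc(1) h(2,3) cc(2) h(4)])
    have n2: "Fc c (wv a cc 0) (wv b d \<i>) (wv a cc 0) (wv b d \<i>) = 0" by (rule NB[OF cc(1) h(2,3) cc(2) h(4)])
    have "2 * c a b a d = (c a b a d + c a d a b) + \<i> * (- \<i> * c a b a d + \<i> * c a d a b)"
      by (simp add: algebra_simps)
    then show ?thesis using e1 e2 n1 n2 by simp
  qed
  have F2: "c b a cc a = 0" if "distinct [a,b,cc]" "a < 4" "b < 4" "cc < 4" for a b cc
  proof -
    have "c b a cc a = - c a b cc a" by (rule A1)
    also have "c a b cc a = - c a b a cc" by (rule A2)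
    finally show ?thesis using F1[of a b cc] that by simp
  qed
  have F3: "c a b cc d = 0" if d: "distinct [a,b,cc,d]" "a < 4" "b < 4" "cc < 4" "d < 4" for a b cc d
  proof -
    have z: "c a b a b = 0" "c a d a d = 0" "c cc b cc b = 0" "c cc d cc d = 0"
      "c a b a d = 0" "c a d a b = 0" "c cc b cc d = 0" "c cc d cc b = 0"
      "c a b cc b = 0" "c cc b a b = 0" "c a d cc d = 0" "c cc d a d = 0"
      using F0 F1 F2 d by auto
    define P where "P s t = Fc c (wv a cc s) (wv b d t) (wv a cc s) (wv b d t)" for s t
    have P: "P s t = cnj s * cnj t * c a b cc d + t * cnj s * c a d cc b + s * cnj t * c cc b a d + s * t * c cc d a b" for s t
      unfolding P_def Hexp[OF d(2-5)] z by (simp add: algebra_simps)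
    have P0: "P s t = 0" for s t unfolding P_def by (rule NB[OF d])
    have "4 * c a b cc d = P 1 1 - P \<i> \<i> + \<i> * P 1 \<i> + \<i> * P \<i> 1"
      unfolding P by (simp add: algebra_simps)
    then show ?thesis unfolding P0 by simp
  qed
  show ?thesis
  proof (cases "x = y \<or> z = w")
    case True then show ?thesis using zi zk by auto
  next
    case False
    then have xy: "x \<noteq> y" and zw: "z \<noteq> w" by auto
    show ?thesis
    proof (cases "x = z")
      case xz: True
      show ?thesis
      proof (cases "y = w")
        case True then show ?thesis using F0 xy lt xz by auto
      next
        case False then show ?thesis using F1[of x y w] xy zw lt xz by auto
      qed
    next
      case xz: False
      show ?thesis
      proof (cases "x = w")
        case xw: True
        show ?thesis
        proof (cases "y = z")
          case True
          have "c x y y x = - c x y x y" by (rule A2)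
          then show ?thesis using F0[of x y] xy lt xw True by auto
        next
          case False
          have "c x y z x = - c x y x z" by (rule A2)
          then show ?thesis using F1[of x y z] xy zw lt xw False by auto
        qed
      next
        case xw: False
        show ?thesis
        proof (cases "y = z")
          case yz: True
          have "c x y y w = - c y x y w" by (rule A1)
          then show ?thesis using F1[of y x w] xy zw lt xw yz by auto
        next
          case yz: False
          show ?thesis
          proof (cases "y = w")
            case True then show ?thesis using F2[of y x z] xy xz zw lt by auto
          next
            case False then show ?thesis using F3[of x y z w] xy xz xw yz zw False lt by auto
          qed
        qed
      qed
    qed
  qed
qed

lemma K_zero: "(\<And>k l. k < 4 \<Longrightarrow> l < 4 \<Longrightarrow> c i j k l = 0) \<Longrightarrow> K c i j u v = 0"
  unfolding K_def by (auto intro!: sum.neutral)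

lemma Fc_zero: "(\<And>i j k l. i < 4 \<Longrightarrow> j < 4 \<Longrightarrow> k < 4 \<Longrightarrow> l < 4 \<Longrightarrow> c i j k l = 0) \<Longrightarrow> Fc c a b u v = 0"
  unfolding Fc_def by (auto intro!: sum.neutral K_zero)

lemma core:
  fixes c :: "nat \<Rightarrow> nat \<Rightarrow> nat \<Rightarrow> nat \<Rightarrow> complex"
  assumes A1: "\<And>i j k l. c i j k l = - c j i k l" and A2: "\<And>i j k l. c i j k l = - c i j l k"
  shows "\<exists>\<omega>. is_basis4 \<omega> \<and> (\<forall>j\<in>{3,4::nat}. Fc c (\<omega> 1) (\<omega> 2) (\<omega> 1) (\<omega> j) = 0 \<and> Fc c (\<omega> 1) (\<omega> 2) (\<omega> 2) (\<omega> j) = 0)"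
proof (cases "\<exists>a b cc d s t. distinct [a,b,cc,d] \<and> a < 4 \<and> b < 4 \<and> cc < 4 \<and> d < 4 \<and>
       Fc c (wv a cc s) (wv b d t) (wv a cc s) (wv b d t) \<noteq> 0")
  case True
  then obtain a b cc d s t where d: "distinct [a,b,cc,d]" "a < 4" "b < 4" "cc < 4" "d < 4"
    and H: "Fc c (wv a cc s) (wv b d t) (wv a cc s) (wv b d t) \<noteq> 0" by blast
  define \<beta> where "\<beta> = eop (eop (base a b cc d) 1 3 s) 2 4 t"
  have b: "is_basis4 \<beta>" unfolding \<beta>_def by (intro eop_basis base_basis d) auto
  have b1: "\<beta> 1 = wv a cc s" by (simp add: \<beta>_def eop_def base_def wv_def fun_eq_iff)
  have b2: "\<beta> 2 = wv b d t" by (simp add: \<beta>_def eop_def base_def wv_def fun_eq_iff)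
  show ?thesis by (rule extend[OF b A2]) (unfold b1 b2, rule H)
next
  case False
  have z: "c x y z w = 0" if "x < 4" "y < 4" "z < 4" "w < 4" for x y z w
    by (rule allzero[OF A1 A2 _ that]) (use False in blast)
  have b: "is_basis4 (base 0 1 2 3)" by (rule base_basis) auto
  show ?thesis
    by (rule exI[where x="base 0 1 2 3"], rule conjI[OF b]) (simp add: Fc_zero z)
qed



lemma Z_nz: assumes "Z i j k l T \<noteq> 0"
  shows "T = {i, j, k+4, l+4} \<and> i \<noteq> j \<and> k \<noteq> l"
  using assms unfolding Z_def wedge_ee one_def by (auto split: if_splits)

lemma supp_sets:
  fixes i j k l :: nat
  assumes S8: "S \<subseteq> {0..<8}" and c1: "card (S \<inter> {0..<4}) = 2" and c2: "card (S \<inter> {4..<8}) = 2"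
    and SU: "S \<subseteq> U" and D: "U - S = {i, j, k+4, l+4}" and ij: "i \<noteq> j" and kl: "k \<noteq> l"
    and lt: "i < 4" "j < 4" "k < 4" "l < 4"
  shows "U = {0..<8}"
proof -
  have nS: "i \<notin> S" "j \<notin> S" "k+4 \<notin> S" "l+4 \<notin> S" using D by auto
  have inU: "i \<in> U" "j \<in> U" "k+4 \<in> U" "l+4 \<in> U" using D by auto
  have cA: "card ({0..<4::nat} - {i,j}) = 2"
    using lt ij by (subst card_Diff_subset) auto
  have "S \<inter> {0..<4} = {0..<4} - {i,j}"
  proof (rule card_subset_eq)
    show "finite ({0..<4::nat} - {i,j})" by simp
    show "S \<inter> {0..<4} \<subseteq> {0..<4} - {i, j}" using nS by blast
    show "card (S \<inter> {0..<4}) = card ({0..<4::nat} - {i, j})" using cA c1 by simp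
  qed
  then have low: "{0..<4} \<subseteq> U" using SU inU by auto
  have cB: "card ({4..<8::nat} - {k+4,l+4}) = 2"
    using lt kl by (subst card_Diff_subset) auto
  have "S \<inter> {4..<8} = {4..<8} - {k+4,l+4}"
  proof (rule card_subset_eq)
    show "finite ({4..<8::nat} - {k+4,l+4})" by simp
    show "S \<inter> {4..<8} \<subseteq> {4..<8} - {k+4,l+4}" using nS by blast
    show "card (S \<inter> {4..<8}) = card ({4..<8::nat} - {k+4,l+4})" using cB c2 by simp
  qed
  then have high: "{4..<8} \<subseteq> U" using SU inU by auto
  have "U \<subseteq> {0..<8}"
  proof
    fix x assume "x \<in> U"
    then have "x \<in> S \<or> x \<in> U - S" by auto
    then show "x \<in> {0..<8}" using S8 D lt by auto
  qed
  moreover have "{0..<8::nat} = {0..<4} \<union> {4..<8}" by auto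
  ultimately show ?thesis using low high by auto
qed

lemma cf_supp:
  assumes "is_22_form \<alpha>" "U \<noteq> {0..<8}" "i < 4" "j < 4" "k < 4" "l < 4"
  shows "cf \<alpha> U i j k l = 0"
  unfolding cf_def wedge_def
proof (rule sum.neutral, rule ballI)
  fix S assume "S \<in> Pow U"
  show "(-1) ^ inv_count S (U - S) * \<alpha> S * Z i j k l (U - S) = 0"
  proof (rule ccontr)
    assume "\<not> ?thesis"
    then have a: "\<alpha> S \<noteq> 0" and z: "Z i j k l (U - S) \<noteq> 0" by auto
    from a assms(1) have "S \<subseteq> {0..<8} \<and> card (S \<inter> {0..<4}) = 2 \<and> card (S \<inter> {4..<8}) = 2"
      unfolding is_22_form_def by blast
    then have s1: "S \<subseteq> {0..<8}" and s2: "card (S \<inter> {0..<4}) = 2" and s3: "card (S \<inter> {4..<8}) = 2" by auto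
    from Z_nz[OF z] have d: "U - S = {i, j, k+4, l+4}" and ij: "i \<noteq> j" and kl: "k \<noteq> l" by auto
    from \<open>S \<in> Pow U\<close> have su: "S \<subseteq> U" by auto
    have "U = {0..<8}" by (rule supp_sets[OF s1 s2 s3 su d ij kl assms(3-6)])
    with assms(2) show False ..
  qed
qed

theorem lemma6:
  assumes "is_22_form \<alpha>"
  shows "\<exists>\<omega>. is_basis4 \<omega> \<and>
    (\<forall>j\<in>{3, 4::nat}.
       wedge \<alpha> (wedge (form10 (\<omega> 1)) (wedge (form10 (\<omega> 2))
          (wedge (form_conj (\<omega> 1)) (form_conj (\<omega> j))))) = (\<lambda>_. 0) \<and>
       wedge \<alpha> (wedge (form10 (\<omega> 1)) (wedge (form10 (\<omega> 2))
          (wedge (form_conj (\<omega> 2)) (form_conj (\<omega> j))))) = (\<lambda>_. 0))"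
proof -
  obtain \<omega> where b: "is_basis4 \<omega>" and h: "\<forall>j\<in>{3,4::nat}. Fc (cf \<alpha> {0..<8}) (\<omega> 1) (\<omega> 2) (\<omega> 1) (\<omega> j) = 0 \<and> Fc (cf \<alpha> {0..<8}) (\<omega> 1) (\<omega> 2) (\<omega> 2) (\<omega> j) = 0"
    using core[of "cf \<alpha> {0..<8}"] cf_anti1 cf_anti2 by blast
  have z: "Fc (cf \<alpha> U) a b u v = 0" if "U \<noteq> {0..<8}" for U a b u v
    by (rule Fc_zero) (use cf_supp[OF assms that] in auto)
  show ?thesis
  proof (rule exI[where x=\<omega>], intro conjI b ballI)
    fix j :: nat assume j: "j \<in> {3,4}"
    show "wedge \<alpha> (wedge (form10 (\<omega> 1)) (wedge (form10 (\<omega> 2))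
          (wedge (form_conj (\<omega> 1)) (form_conj (\<omega> j))))) = (\<lambda>_. 0)"
      unfolding fun_eq_iff expansion using h j z by (metis (no_types))
    show "wedge \<alpha> (wedge (form10 (\<omega> 1)) (wedge (form10 (\<omega> 2))
          (wedge (form_conj (\<omega> 2)) (form_conj (\<omega> j))))) = (\<lambda>_. 0)"
      unfolding fun_eq_iff expansion using h j z by (metis (no_types))
  qed
qed

end
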